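(* Let $(X,d)$ be a separable metric space, $T\colon X\to X$ a Borel measurable map, $(s_n)_{n\ge1}$ a scale sequence, and $\phi(x,y)=\liminf_{n\to\infty}s_n\,d(T^nx,y)$. (1) If $(s_n)$ is monotone or steady, then for every $T$-invariant $T$-ergodic Borel probability measure $\mu$ and every $y\in X$, the function $x\mapsto\phi(x,y)$ is $\mu$-a.e. constant; if moreover $(s_n)$ is two-jumpy, this constant lies in $\{0,\infty\}$. (2) If $(s_n)$ is steady and $T$ is a local contraction mod $\nu$ for some $T$-invariant $T$-ergodic Borel probability measure $\nu$, then for every $x\in X$ the function $y\mapsto\phi(x,y)$ is $\nu$-a.e. constant. (3) If $(s_n)$ is nice, $\nu$ is a $T$-invariant, $T$-ergodic, decisive Borel probability measure, and $T$ is locally Lipschitz mod $\nu$, then for every $x\in X$ either $\phi(x,y)=0$ for $\nu$-a.e. $y$, or $\phi(x,y)=\infty$ for $\nu$-a.e. $y$.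
   Context: A scale sequence is a sequence of positive reals $s_n\to\infty$. It is monotone if $s_{n+1}\ge s_n$ for large $n$; steady if $s_{n+1}/s_n\to1$; two-jumpy if monotone and $\liminf_n s_{2n}/s_n>1$; bounded-ratio if $\sup_n s_{n+1}/s_n<\infty$; nice if two-jumpy and bounded-ratio. The dilation gauge is $D_T(x)=\limsup_{y\to x,\,y\in X} d(Ty,Tx)/d(y,x)$ if $x$ is a limit point of $X$ and $D_T(x)=0$ if $x$ is isolated. $T$ is a local contraction mod $\nu$ if $D_T\le1$ $\nu$-a.e., and locally Lipschitz mod $\nu$ if $D_T<\infty$ $\nu$-a.e. A measure $\nu$ is decisive if for every sequence $(x_n)$ in $X$ and every scale sequence $(s_n)$, $\liminf_n s_n d(x_n,x)\in\{0,\infty\}$ for $\nu$-a.e. $x$. *)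

theory Defs
  imports "HOL-Probability.Probability"
begin

text \<open>The metric space X is the whole carrier type 'a (a metric_space type).\<close>

definition scale_seq :: "(nat \<Rightarrow> real) \<Rightarrow> bool" where
  "scale_seq s \<longleftrightarrow> (\<forall>n. s n > 0) \<and> filterlim s at_top sequentially"

definition monotone_scale :: "(nat \<Rightarrow> real) \<Rightarrow> bool" where
  "monotone_scale s \<longleftrightarrow> (\<forall>\<^sub>F n in sequentially. s (Suc n) \<ge> s n)"

definition steady :: "(nat \<Rightarrow> real) \<Rightarrow> bool" where
  "steady s \<longleftrightarrow> (\<lambda>n. s (Suc n) / s n) \<longlonglongrightarrow> 1"

definition two_jumpy :: "(nat \<Rightarrow> real) \<Rightarrow> bool" where
  "two_jumpy s \<longleftrightarrow> monotone_scale s \<and>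
     liminf (\<lambda>n. ereal (s (2 * n) / s n)) > 1"

definition bounded_ratio :: "(nat \<Rightarrow> real) \<Rightarrow> bool" where
  "bounded_ratio s \<longleftrightarrow> bdd_above (range (\<lambda>n. s (Suc n) / s n))"

definition nice :: "(nat \<Rightarrow> real) \<Rightarrow> bool" where
  "nice s \<longleftrightarrow> two_jumpy s \<and> bounded_ratio s"

definition dilation_gauge :: "('a::metric_space \<Rightarrow> 'a) \<Rightarrow> 'a \<Rightarrow> ereal" where
  "dilation_gauge T x =
     (if x islimpt UNIV
      then Limsup (at x) (\<lambda>y. ereal (dist (T y) (T x) / dist y x))
      else 0)"

definition local_contraction_mod :: "('a::metric_space \<Rightarrow> 'a) \<Rightarrow> 'a measure \<Rightarrow> bool" where
  "local_contraction_mod T \<nu> \<longleftrightarrow> (AE x in \<nu>. dilation_gauge T x \<le> 1)"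

definition locally_lipschitz_mod :: "('a::metric_space \<Rightarrow> 'a) \<Rightarrow> 'a measure \<Rightarrow> bool" where
  "locally_lipschitz_mod T \<nu> \<longleftrightarrow> (AE x in \<nu>. dilation_gauge T x < \<infinity>)"

definition decisive :: "'a::metric_space measure \<Rightarrow> bool" where
  "decisive \<nu> \<longleftrightarrow> (\<forall>(xs :: nat \<Rightarrow> 'a) s. scale_seq s \<longrightarrow>
     (AE x in \<nu>. liminf (\<lambda>n. ereal (s n * dist (xs n) x)) \<in> {0, \<infinity>}))"

definition borel_prob :: "'a::topological_space measure \<Rightarrow> bool" where
  "borel_prob M \<longleftrightarrow> sets M = sets borel \<and> prob_space M"

definition invariant_measure :: "('a \<Rightarrow> 'a) \<Rightarrow> 'a measure \<Rightarrow> bool" where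
  "invariant_measure T M \<longleftrightarrow> T \<in> measurable M M \<and> distr M M T = M"

definition ergodic_measure :: "('a \<Rightarrow> 'a) \<Rightarrow> 'a measure \<Rightarrow> bool" where
  "ergodic_measure T M \<longleftrightarrow> (\<forall>A\<in>sets M. T -` A \<inter> space M = A \<longrightarrow>
      emeasure M A = 0 \<or> emeasure M A = 1)"

definition phi :: "(nat \<Rightarrow> real) \<Rightarrow> ('a::metric_space \<Rightarrow> 'a) \<Rightarrow> 'a \<Rightarrow> 'a \<Rightarrow> ereal" where
  "phi s T x y = liminf (\<lambda>n. ereal (s n * dist ((T ^^ n) x) y))"

end

theory Submission
  imports Defs
begin

lemma funpow_meas: "T \<in> measurable M M \<Longrightarrow> (T^^n) \<in> measurable M M"
  by (induction n) (auto intro: measurable_comp[where N=M] simp del: funpow.simps simp: funpow_Suc_right)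

lemma funpow_distr:
  assumes "T \<in> measurable M M" "distr M M T = M"
  shows "distr M M (T^^n) = M"
proof (induction n)
  case 0 then show ?case by (simp add: distr_id2[OF refl] id_def) 
next
  case (Suc n)
  have "distr M M (T^^Suc n) = distr (distr M M (T^^n)) M T"
    by (simp add: distr_distr assms funpow_meas)
  then show ?case using Suc assms by (simp add: comp_def)
qed

lemma funpow_emeasure:
  assumes "T \<in> measurable M M" "distr M M T = M" "B \<in> sets M"
  shows "emeasure M ((T^^n) -` B \<inter> space M) = emeasure M B"
proof -
  have "emeasure M B = emeasure (distr M M (T^^n)) B" using funpow_distr[OF assms(1,2)] by simp
  also have "\<dots> = emeasure M ((T^^n) -` B \<inter> space M)"
    by (rule emeasure_distr[OF funpow_meas[OF assms(1)] assms(3)])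
  finally show ?thesis by simp
qed

lemma funpow_measure:
  assumes "T \<in> measurable M M" "distr M M T = M" "B \<in> sets M"
  shows "measure M ((T^^n) -` B \<inter> space M) = measure M B"
  using funpow_emeasure[OF assms] by (simp add: measure_def)

lemma AE_pullback:
  assumes "T \<in> measurable M M" "distr M M T = M" "AE x in M. P x" "{x\<in>space M. P x} \<in> sets M"
  shows "AE x in M. P ((T^^n) x)"
proof -
  have "AE x in distr M M (T^^n). P x" by (subst funpow_distr[OF assms(1,2)]) (rule assms(3))
  then show ?thesis using AE_distr_iff[OF funpow_meas[OF assms(1)] assms(4)] by simp
qed

lemma inv_set:
  assumes T: "T \<in> measurable M M" and D: "distr M M T = M" and E: "ergodic_measure T M"
    and A: "A \<in> sets M" and AEA: "AE x in M. x \<in> A \<longrightarrow> T x \<in> A"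
  shows "emeasure M A = 0 \<or> emeasure M A = 1"
proof -
  define C where "C N = (\<Inter>n\<in>{N..}. (T^^n) -` A \<inter> space M)" for N
  define B where "B = (\<Union>N. C N)"
  have Tn: "\<And>n. (T^^n) \<in> measurable M M" using funpow_meas[OF T] .
  have pre: "(T^^n) -` A \<inter> space M \<in> sets M" for n by (rule measurable_sets[OF Tn A])
  have Csets: "C N \<in> sets M" for N unfolding C_def
    by (rule sets.countable_INT) (use pre in blast, simp)
  have Bsets: "B \<in> sets M" unfolding B_def using Csets by auto
  have Bsp: "B \<subseteq> space M" unfolding B_def C_def by auto
  have memB: "x \<in> B \<longleftrightarrow> x \<in> space M \<and> (\<exists>N. \<forall>n\<ge>N. (T^^n) x \<in> A)" for x
    unfolding B_def C_def by auto
  have Tsp: "x \<in> space M \<Longrightarrow> T x \<in> space M" for x by (rule measurable_space[OF T])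
  have inv: "T -` B \<inter> space M = B"
  proof (intro set_eqI iffI)
    fix x assume "x \<in> T -` B \<inter> space M"
    then obtain N where x: "x \<in> space M" "\<forall>n\<ge>N. (T^^n) (T x) \<in> A" using memB by auto
    have "\<forall>n\<ge>Suc N. (T^^n) x \<in> A"
    proof (intro allI impI)
      fix n assume "Suc N \<le> n"
      then obtain k where k: "n = Suc k" "k \<ge> N" by (cases n) auto
      have "(T^^k) (T x) \<in> A" using x(2) k(2) by blast
      then show "(T^^n) x \<in> A" unfolding k(1) by (simp only: funpow_Suc_right comp_apply)
    qed
    then show "x \<in> B" using memB x(1) by blast
  next
    fix x assume "x \<in> B"
    then obtain N where x: "x \<in> space M" "\<forall>n\<ge>N. (T^^n) x \<in> A" using memB by auto
    have "\<forall>n\<ge>N. (T^^n) (T x) \<in> A"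
    proof (intro allI impI)
      fix n assume "N \<le> n"
      then have "(T^^Suc n) x \<in> A" using x(2) le_SucI by blast
      then show "(T^^n) (T x) \<in> A" by (simp only: funpow_Suc_right comp_apply)
    qed
    then show "x \<in> T -` B \<inter> space M" using memB x(1) Tsp by auto
  qed
  have EB: "emeasure M B = 0 \<or> emeasure M B = 1" using E Bsets inv unfolding ergodic_measure_def by blast
  have setP: "{x\<in>space M. x \<in> A \<longrightarrow> T x \<in> A} \<in> sets M"
  proof -
    have "{x\<in>space M. x \<in> A \<longrightarrow> T x \<in> A} = (space M - A) \<union> (T -` A \<inter> space M)" by auto
    then show ?thesis using A measurable_sets[OF T A] by auto
  qed
  have "AE x in M. \<forall>n. (T^^n) x \<in> A \<longrightarrow> T ((T^^n) x) \<in> A"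
    using AE_pullback[OF T D AEA setP] by (simp add: AE_all_countable)
  moreover have "AE x in M. (\<forall>n. (T^^n) x \<in> A \<longrightarrow> T ((T^^n) x) \<in> A) \<longrightarrow> (x \<in> A \<longrightarrow> x \<in> B)"
  proof (rule AE_I2, intro impI)
    fix x assume H: "\<forall>n. (T^^n) x \<in> A \<longrightarrow> T ((T^^n) x) \<in> A" "x \<in> space M" and xA: "x \<in> A"
    have "\<forall>n. (T^^n) x \<in> A"
    proof
      fix n show "(T^^n) x \<in> A" by (induction n) (use xA H in auto)
    qed
    then show "x \<in> B" using memB H(2) by blast
  qed
  ultimately have "AE x in M. x \<in> A \<longrightarrow> x \<in> B" by (rule AE_mp)
  then have le1: "emeasure M A \<le> emeasure M B" using emeasure_mono_AE Bsets by blast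
  have "incseq C" unfolding C_def incseq_def by auto
  then have "(SUP N. emeasure M (C N)) = emeasure M B"
    unfolding B_def using Csets by (intro SUP_emeasure_incseq) auto
  moreover have "emeasure M (C N) \<le> emeasure M A" for N
  proof -
    have "C N \<subseteq> (T^^N) -` A \<inter> space M" unfolding C_def by auto
    then have "emeasure M (C N) \<le> emeasure M ((T^^N) -` A \<inter> space M)"
      by (intro emeasure_mono) (auto intro: measurable_sets[OF Tn A])
    then show ?thesis using funpow_emeasure[OF T D A] by simp
  qed
  ultimately have "emeasure M B \<le> emeasure M A" by (metis SUP_least)
  then show ?thesis using le1 EB by auto
qed


lemma inv_fun:
  fixes f :: "'a \<Rightarrow> ereal"
  assumes P: "prob_space M" and T: "T \<in> measurable M M" and D: "distr M M T = M"
    and E: "ergodic_measure T M" and f: "f \<in> borel_measurable M"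
    and AEf: "AE x in M. f (T x) \<le> f x"
  shows "\<exists>c. AE x in M. f x = c"
proof -
  define A where "A r = {x\<in>space M. f x < ereal (real_of_rat r)}" for r
  have As: "A r \<in> sets M" for r
  proof -
    have [measurable]: "f \<in> borel_measurable M" by (rule f)
    show ?thesis unfolding A_def by measurable
  qed
  have "AE x in M. x \<in> A r \<longrightarrow> T x \<in> A r" for r
    by (rule AE_mp[OF AEf AE_I2]) (auto simp: A_def intro: measurable_space[OF T])
  then have m01: "emeasure M (A r) = 0 \<or> emeasure M (A r) = 1" for r
    using inv_set[OF T D E As] by blast
  have "AE x in M. (x \<in> A r \<longleftrightarrow> emeasure M (A r) = 1)" for r
  proof (cases "emeasure M (A r) = 0")
    case True
    then have "A r \<in> null_sets M" using As by (simp add: null_sets_def)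
    then show ?thesis using True by (auto elim: eventually_mono dest: AE_not_in)
  next
    case False
    then have e1: "emeasure M (A r) = 1" using m01 by blast
    then have "measure M (A r) = 1" by (simp add: measure_def)
    then have "AE x in M. x \<in> A r" by (rule prob_space.AE_prob_1[OF P])
    then show ?thesis using e1 by (auto elim: eventually_mono)
  qed
  then have G: "AE x in M. \<forall>r. (x \<in> A r \<longleftrightarrow> emeasure M (A r) = 1)"
    by (simp add: AE_all_countable)
  then have G2: "AE x in M. x \<in> space M \<and> (\<forall>r. (x \<in> A r \<longleftrightarrow> emeasure M (A r) = 1))"
    by (rule eventually_conj[OF AE_space])
  then obtain x0 where x0s: "x0 \<in> space M" and x0: "\<forall>r. (x0 \<in> A r \<longleftrightarrow> emeasure M (A r) = 1)"
    using eventually_happens'[OF prob_space.ae_filter_bot[OF P]] by blast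
  have "AE x in M. f x = f x0"
  proof (rule AE_mp[OF G AE_I2], rule impI)
    fix x assume x: "x \<in> space M" and H: "\<forall>r. (x \<in> A r \<longleftrightarrow> emeasure M (A r) = 1)"
    have key: "\<not> (f a < f b)" if a: "a \<in> space M" "\<forall>r. (a \<in> A r \<longleftrightarrow> emeasure M (A r) = 1)"
      and b: "b \<in> space M" "\<forall>r. (b \<in> A r \<longleftrightarrow> emeasure M (A r) = 1)" for a b
    proof
      assume ab: "f a < f b"
      obtain z1 where z1: "f a < ereal z1" "ereal z1 < f b" using ereal_dense2[OF ab] by blast
      obtain z2 where z2: "ereal z1 < ereal z2" "ereal z2 < f b" using ereal_dense2[OF z1(2)] by blast
      have "z1 < z2" using z2(1) by simp
      then obtain q where q: "q \<in> \<rat>" "z1 < q" "q < z2" using Rats_dense_in_real by blast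
      obtain r where r: "q = real_of_rat r" using Rats_cases[OF q(1)] by metis
      have "ereal z1 < ereal q" using q(2) by simp
      then have "f a < ereal q" by (rule less_trans[OF z1(1)])
      then have "a \<in> A r" using a(1) unfolding A_def r by simp
      then have "b \<in> A r" using a(2) b(2) by blast
      then have fb: "f b < ereal q" unfolding A_def r by simp
      have "ereal q < ereal z2" using q(3) by simp
      then have "f b < ereal z2" by (rule less_trans[OF fb])
      then show False using z2(2) by simp
    qed
    show "f x = f x0" using key[OF x H x0s x0] key[OF x0s x0 x H] by (metis not_less_iff_gr_or_eq)
  qed
  then show ?thesis by blast
qed

lemma freq_less_liminf:
  fixes b :: "nat \<Rightarrow> real"
  assumes "liminf (\<lambda>n. ereal (b n)) < ereal r"
  shows "\<exists>\<^sub>F n in sequentially. b n < r"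
proof (rule ccontr)
  assume "\<not> (\<exists>\<^sub>F n in sequentially. b n < r)"
  then have "eventually (\<lambda>n. ereal r \<le> ereal (b n)) sequentially"
    by (simp add: not_frequently not_less)
  then have "ereal r \<le> liminf (\<lambda>n. ereal (b n))" by (rule Liminf_bounded)
  then show False using assms by simp
qed

lemma freq_ev_contr:
  assumes "\<exists>\<^sub>F n in F. P n" "eventually (\<lambda>n. \<not> P n) F" shows False
  using assms by (simp add: frequently_def)

lemma liminf_nonneg:
  fixes b :: "nat \<Rightarrow> real"
  assumes "\<forall>n. b n \<ge> 0" shows "0 \<le> liminf (\<lambda>n. ereal (b n))"
  by (rule Liminf_bounded) (use assms in simp)

lemma liminf_transfer:
  fixes a b :: "nat \<Rightarrow> real"
  assumes b0: "\<forall>n. b n \<ge> 0"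
    and H: "\<And>r' \<rho>. r' > 0 \<Longrightarrow> \<rho> > 1 \<Longrightarrow> (\<exists>\<^sub>F n in sequentially. b n < r') \<Longrightarrow> (\<exists>\<^sub>F n in sequentially. a n < \<rho> * r')"
  shows "liminf (\<lambda>n. ereal (a n)) \<le> liminf (\<lambda>n. ereal (b n))"
proof (rule ccontr)
  assume "\<not> ?thesis"
  then have lt: "liminf (\<lambda>n. ereal (b n)) < liminf (\<lambda>n. ereal (a n))" by simp
  obtain r1 where r1: "liminf (\<lambda>n. ereal (b n)) < ereal r1" "ereal r1 < liminf (\<lambda>n. ereal (a n))"
    using ereal_dense2[OF lt] by blast
  obtain r2 where r2: "ereal r1 < ereal r2" "ereal r2 < liminf (\<lambda>n. ereal (a n))"
    using ereal_dense2[OF r1(2)] by blast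
  have "0 < ereal r1" using liminf_nonneg[OF b0] r1(1) by (rule le_less_trans)
  then have r1p: "r1 > 0" by simp
  have r12: "r1 < r2" using r2(1) by simp
  have fb: "\<exists>\<^sub>F n in sequentially. b n < r1" by (rule freq_less_liminf[OF r1(1)])
  have "\<exists>\<^sub>F n in sequentially. a n < (r2 / r1) * r1"
    by (rule H[OF r1p _ fb]) (use r1p r12 in simp)
  then have fa: "\<exists>\<^sub>F n in sequentially. a n < r2" using r1p by simp
  have "eventually (\<lambda>n. ereal r2 < ereal (a n)) sequentially" by (rule less_LiminfD[OF r2(2)])
  then have "eventually (\<lambda>n. \<not> a n < r2) sequentially" by (rule eventually_mono) simp
  then show False using freq_ev_contr[OF fa] by blast
qed

lemma liminf_zero_transfer:
  fixes a b :: "nat \<Rightarrow> real"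
  assumes a0: "\<forall>n. a n \<ge> 0" and K: "K > 0"
    and H: "\<And>r'. r' > 0 \<Longrightarrow> (\<exists>\<^sub>F n in sequentially. b n < r') \<Longrightarrow> (\<exists>\<^sub>F n in sequentially. a n < K * r')"
    and b: "liminf (\<lambda>n. ereal (b n)) = 0"
  shows "liminf (\<lambda>n. ereal (a n)) = 0"
proof (rule ccontr)
  assume "\<not> ?thesis"
  then have lt: "0 < liminf (\<lambda>n. ereal (a n))" using liminf_nonneg[OF a0] by simp
  obtain r2 where r2: "0 < ereal r2" "ereal r2 < liminf (\<lambda>n. ereal (a n))"
    using ereal_dense2[OF lt] by blast
  have r2p: "r2 > 0" using r2(1) by simp
  have "liminf (\<lambda>n. ereal (b n)) < ereal (r2 / K)" using b r2p K by simp
  then have fb: "\<exists>\<^sub>F n in sequentially. b n < r2 / K" by (rule freq_less_liminf)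
  have "\<exists>\<^sub>F n in sequentially. a n < K * (r2 / K)"
    by (rule H[OF _ fb]) (use r2p K in simp)
  then have fa: "\<exists>\<^sub>F n in sequentially. a n < r2" using K by simp
  have "eventually (\<lambda>n. ereal r2 < ereal (a n)) sequentially" by (rule less_LiminfD[OF r2(2)])
  then have "eventually (\<lambda>n. \<not> a n < r2) sequentially" by (rule eventually_mono) simp
  then show False using freq_ev_contr[OF fa] by blast
qed

lemma freq_unshift:
  assumes "\<exists>\<^sub>F n in sequentially. P (Suc n)" shows "\<exists>\<^sub>F n in sequentially. P n"
  unfolding frequently_sequentially
proof
  fix N
  obtain n where "n \<ge> N" "P (Suc n)" using assms unfolding frequently_sequentially by blast
  then show "\<exists>n\<ge>N. P n" by (intro exI[of _ "Suc n"]) auto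
qed

lemma freq_shift:
  assumes "\<exists>\<^sub>F n in sequentially. P n" shows "\<exists>\<^sub>F n in sequentially. P (Suc n)"
  unfolding frequently_sequentially
proof
  fix N
  obtain n where "n \<ge> Suc N" "P n" using assms unfolding frequently_sequentially by blast
  then obtain m where "n = Suc m" by (cases n) auto
  then show "\<exists>n\<ge>N. P (Suc n)" using \<open>n \<ge> Suc N\<close> \<open>P n\<close> by (intro exI[of _ m]) auto
qed

lemma gauge_ev:
  assumes "dilation_gauge T y < ereal c"
  shows "eventually (\<lambda>z. dist (T z) (T y) / dist z y < c) (at y)"
proof (cases "y islimpt UNIV")
  case True
  then have "Limsup (at y) (\<lambda>z. ereal (dist (T z) (T y) / dist z y)) < ereal c"
    using assms unfolding dilation_gauge_def by simp
  then have "eventually (\<lambda>z. ereal (dist (T z) (T y) / dist z y) < ereal c) (at y)"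
    by (rule Limsup_lessD)
  then show ?thesis by (rule eventually_mono) simp
next
  case False
  then have "eventually (\<lambda>z. z \<notin> UNIV) (at y)" using islimpt_iff_eventually by blast
  then show ?thesis by (rule eventually_mono) simp
qed

lemma dyn_y:
  fixes T :: "'a::metric_space \<Rightarrow> 'a"
  assumes r1: "\<rho>1 > 0" and r2: "\<rho>2 > 0"
    and G: "eventually (\<lambda>z. dist (T z) (T y) / dist z y < \<rho>2) (at y)"
    and R: "eventually (\<lambda>n. s (Suc n) \<le> \<rho>1 * s n) sequentially"
    and sc: "scale_seq s" and rp: "r' > 0"
    and F: "\<exists>\<^sub>F n in sequentially. s n * dist ((T^^n) x) y < r'"
  shows "\<exists>\<^sub>F n in sequentially. s n * dist ((T^^n) x) (T y) < \<rho>1 * \<rho>2 * r'"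
proof -
  obtain \<delta> where dp: "\<delta> > 0" and dG: "\<And>z. z \<noteq> y \<Longrightarrow> dist z y < \<delta> \<Longrightarrow> dist (T z) (T y) / dist z y < \<rho>2"
    using G unfolding eventually_at by auto
  have spos: "\<And>n. s n > 0" using sc unfolding scale_seq_def by blast
  have "filterlim s at_top sequentially" using sc unfolding scale_seq_def by blast
  then have EV: "eventually (\<lambda>n. r' / \<delta> < s n) sequentially" unfolding filterlim_at_top_dense by blast
  have "\<exists>\<^sub>F n in sequentially. (r' / \<delta> < s n \<and> s (Suc n) \<le> \<rho>1 * s n) \<and> s n * dist ((T^^n) x) y < r'"
    by (rule frequently_eventually_conj[OF F eventually_conj[OF EV R]])
  then have "\<exists>\<^sub>F n in sequentially. s (Suc n) * dist ((T^^Suc n) x) (T y) < \<rho>1 * \<rho>2 * r'"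
  proof (rule frequently_elim1)
    fix n assume H: "(r' / \<delta> < s n \<and> s (Suc n) \<le> \<rho>1 * s n) \<and> s n * dist ((T^^n) x) y < r'"
    define z where "z = (T^^n) x"
    have Tz: "(T^^Suc n) x = T z" unfolding z_def by simp
    have sn: "s n > 0" "s (Suc n) > 0" using spos by auto
    show "s (Suc n) * dist ((T^^Suc n) x) (T y) < \<rho>1 * \<rho>2 * r'"
    proof (cases "z = y")
      case True
      then show ?thesis unfolding Tz using r1 r2 rp by simp
    next
      case False
      have dz: "dist z y > 0" using False by simp
      have "s n * dist z y < r'" using H unfolding z_def by blast
      then have "dist z y < r' / s n" using sn by (simp add: field_simps)
      also have "r' / s n < \<delta>" using H sn dp by (simp add: field_simps)
      finally have "dist (T z) (T y) / dist z y < \<rho>2" using dG False by blast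
      then have d2: "dist (T z) (T y) < \<rho>2 * dist z y" using dz by (simp add: field_simps)
      have "s (Suc n) * dist (T z) (T y) \<le> \<rho>1 * s n * dist (T z) (T y)"
        using H by (intro mult_right_mono) auto
      also have "\<dots> \<le> \<rho>1 * s n * (\<rho>2 * dist z y)"
        using d2 r1 sn by (intro mult_left_mono) auto
      also have "\<dots> = \<rho>1 * \<rho>2 * (s n * dist z y)" by simp
      also have "\<dots> < \<rho>1 * \<rho>2 * r'"
        using \<open>s n * dist z y < r'\<close> r1 r2 by simp
      finally show ?thesis unfolding Tz .
    qed
  qed
  then show ?thesis by (rule freq_unshift)
qed

lemma dyn_x:
  fixes T :: "'a::metric_space \<Rightarrow> 'a"
  assumes R: "eventually (\<lambda>n. s n \<le> \<rho> * s (Suc n)) sequentially"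
    and F: "\<exists>\<^sub>F n in sequentially. s n * dist ((T^^n) x) y < r'" and rp: "\<rho> > 0"
  shows "\<exists>\<^sub>F n in sequentially. s n * dist ((T^^n) (T x)) y < \<rho> * r'"
proof -
  have "\<exists>\<^sub>F n in sequentially. s (Suc n) * dist ((T^^Suc n) x) y < r'" by (rule freq_shift[OF F])
  then have "\<exists>\<^sub>F n in sequentially. s n \<le> \<rho> * s (Suc n) \<and> s (Suc n) * dist ((T^^Suc n) x) y < r'"
    by (rule frequently_eventually_conj[OF _ R])
  then show ?thesis
  proof (rule frequently_elim1)
    fix n assume H: "s n \<le> \<rho> * s (Suc n) \<and> s (Suc n) * dist ((T^^Suc n) x) y < r'"
    have eq: "(T^^n) (T x) = (T^^Suc n) x" by (simp only: funpow_Suc_right comp_apply)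
    have "s n * dist ((T^^Suc n) x) y \<le> \<rho> * s (Suc n) * dist ((T^^Suc n) x) y"
      using H by (intro mult_right_mono) auto
    also have "\<dots> = \<rho> * (s (Suc n) * dist ((T^^Suc n) x) y)" by simp
    also have "\<dots> < \<rho> * r'" using H rp by simp
    finally show "s n * dist ((T^^n) (T x)) y < \<rho> * r'" unfolding eq .
  qed
qed

lemma phi_Tx_le:
  fixes T :: "'a::metric_space \<Rightarrow> 'a"
  assumes sc: "scale_seq s" and ms: "monotone_scale s \<or> steady s"
  shows "phi s T (T x) y \<le> phi s T x y"
  unfolding phi_def
proof (rule liminf_transfer)
  have spos: "\<And>n. s n > 0" using sc unfolding scale_seq_def by blast
  show "\<forall>n. 0 \<le> s n * dist ((T ^^ n) x) y" using spos by (simp add: less_imp_le)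
  fix r' \<rho> :: real
  assume rp: "r' > 0" and rho: "\<rho> > 1" and F: "\<exists>\<^sub>F n in sequentially. s n * dist ((T ^^ n) x) y < r'"
  have R: "eventually (\<lambda>n. s n \<le> \<rho> * s (Suc n)) sequentially"
    using ms
  proof
    assume "monotone_scale s"
    then have "eventually (\<lambda>n. s n \<le> s (Suc n)) sequentially" unfolding monotone_scale_def .
    then show ?thesis
    proof (rule eventually_mono)
      fix n assume "s n \<le> s (Suc n)"
      moreover have "s (Suc n) \<le> \<rho> * s (Suc n)" using rho spos[of "Suc n"] by simp
      ultimately show "s n \<le> \<rho> * s (Suc n)" by linarith
    qed
  next
    assume "steady s"
    then have "(\<lambda>n. s (Suc n) / s n) \<longlonglongrightarrow> 1" unfolding steady_def .
    moreover have "1 / \<rho> < 1" using rho by simp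
    ultimately have "eventually (\<lambda>n. 1 / \<rho> < s (Suc n) / s n) sequentially" by (rule order_tendstoD(1))
    then show ?thesis
    proof (rule eventually_mono)
      fix n assume "1 / \<rho> < s (Suc n) / s n"
      then show "s n \<le> \<rho> * s (Suc n)" using rho spos[of n] spos[of "Suc n"]
        by (simp add: field_simps)
    qed
  qed
  show "\<exists>\<^sub>F n in sequentially. s n * dist ((T ^^ n) (T x)) y < \<rho> * r'"
    by (rule dyn_x[OF R F]) (use rho in simp)
qed

lemma phi_Ty_le:
  fixes T :: "'a::metric_space \<Rightarrow> 'a"
  assumes sc: "scale_seq s" and st: "steady s" and D: "dilation_gauge T y \<le> 1"
  shows "phi s T x (T y) \<le> phi s T x y"
  unfolding phi_def
proof (rule liminf_transfer)
  have spos: "\<And>n. s n > 0" using sc unfolding scale_seq_def by blast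
  show "\<forall>n. 0 \<le> s n * dist ((T ^^ n) x) y" using spos by (simp add: less_imp_le)
  fix r' \<rho> :: real
  assume rp: "r' > 0" and rho: "\<rho> > 1" and F: "\<exists>\<^sub>F n in sequentially. s n * dist ((T ^^ n) x) y < r'"
  define q where "q = sqrt \<rho>"
  have q1: "q > 1" unfolding q_def using rho by simp
  have qq: "q * q = \<rho>" unfolding q_def using rho by simp
  have "(1::ereal) < ereal q" using q1 by simp
  then have "dilation_gauge T y < ereal q" by (rule le_less_trans[OF D])
  then have G: "eventually (\<lambda>z. dist (T z) (T y) / dist z y < q) (at y)" by (rule gauge_ev)
  have "(\<lambda>n. s (Suc n) / s n) \<longlonglongrightarrow> 1" using st unfolding steady_def .
  then have "eventually (\<lambda>n. s (Suc n) / s n < q) sequentially" using q1 by (rule order_tendstoD(2))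
  then have R: "eventually (\<lambda>n. s (Suc n) \<le> q * s n) sequentially"
  proof (rule eventually_mono)
    fix n assume "s (Suc n) / s n < q"
    then show "s (Suc n) \<le> q * s n" using spos[of n] by (simp add: field_simps)
  qed
  have "\<exists>\<^sub>F n in sequentially. s n * dist ((T^^n) x) (T y) < q * q * r'"
    by (rule dyn_y[OF _ _ G R sc rp F]) (use q1 in auto)
  then show "\<exists>\<^sub>F n in sequentially. s n * dist ((T^^n) x) (T y) < \<rho> * r'" using qq by simp
qed

lemma phi_Ty_zero:
  fixes T :: "'a::metric_space \<Rightarrow> 'a"
  assumes sc: "scale_seq s" and br: "bounded_ratio s" and D: "dilation_gauge T y < \<infinity>"
    and z: "phi s T x y = 0"
  shows "phi s T x (T y) = 0"
proof -
  have spos: "\<And>n. s n > 0" using sc unfolding scale_seq_def by blast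
  have nn: "\<forall>n. 0 \<le> s n * dist ((T ^^ n) x) (T y)" using spos by (simp add: less_imp_le)
  obtain K0 where K0: "\<And>n. s (Suc n) / s n \<le> K0" using br unfolding bounded_ratio_def bdd_above_def by auto
  define K where "K = max K0 1"
  have Kp: "K > 0" unfolding K_def by simp
  have R: "eventually (\<lambda>n. s (Suc n) \<le> K * s n) sequentially"
  proof (rule always_eventually, rule allI)
    fix n have "s (Suc n) / s n \<le> K" using K0[of n] unfolding K_def by linarith
    then show "s (Suc n) \<le> K * s n" using spos[of n] by (simp add: field_simps)
  qed
  define \<rho>2 where "\<rho>2 = max 1 (real_of_ereal (dilation_gauge T y) + 1)"
  have r2p: "\<rho>2 > 0" unfolding \<rho>2_def by simp
  have "dilation_gauge T y < ereal \<rho>2"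
  proof (cases "dilation_gauge T y")
    case (real r) then show ?thesis unfolding \<rho>2_def by (simp add: less_max_iff_disj)
  next
    case PInf then show ?thesis using D by simp
  next
    case MInf then show ?thesis by simp
  qed
  then have G: "eventually (\<lambda>z. dist (T z) (T y) / dist z y < \<rho>2) (at y)" by (rule gauge_ev)
  have KK: "0 < K * \<rho>2" using Kp r2p by simp
  have H: "\<exists>\<^sub>F n in sequentially. s n * dist ((T^^n) x) (T y) < K * \<rho>2 * r'"
    if rp: "r' > 0" and F: "\<exists>\<^sub>F n in sequentially. s n * dist ((T ^^ n) x) y < r'" for r'
    by (rule dyn_y[OF Kp r2p G R sc rp F])
  have zz: "liminf (\<lambda>n. ereal (s n * dist ((T ^^ n) x) y)) = 0" using z unfolding phi_def .
  show ?thesis unfolding phi_def by (rule liminf_zero_transfer[OF nn KK H zz])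
qed

lemma phi_meas_x:
  fixes T :: "'a::metric_space \<Rightarrow> 'a"
  assumes T: "T \<in> borel_measurable borel" and M: "sets M = sets borel"
  shows "(\<lambda>x. phi s T x y) \<in> borel_measurable M"
proof -
  have "(\<lambda>x. phi s T x y) \<in> borel_measurable borel" unfolding phi_def
  proof (rule borel_measurable_liminf)
    fix n
    have Tn: "(T^^n) \<in> borel_measurable borel" by (rule funpow_meas[OF T])
    have c: "continuous_on UNIV (\<lambda>z. ereal (s n * dist z y))" by (intro continuous_intros)
    show "(\<lambda>x. ereal (s n * dist ((T^^n) x) y)) \<in> borel_measurable borel"
      by (rule borel_measurable_continuous_on[OF c Tn])
  qed
  then show ?thesis by (subst measurable_cong_sets[OF M refl]) assumption
qed

lemma phi_meas_y:
  fixes T :: "'a::metric_space \<Rightarrow> 'a"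
  assumes M: "sets M = sets borel"
  shows "(\<lambda>y. phi s T x y) \<in> borel_measurable M"
proof -
  have "(\<lambda>y. phi s T x y) \<in> borel_measurable borel" unfolding phi_def
  proof (rule borel_measurable_liminf)
    fix n
    have c: "continuous_on UNIV (\<lambda>z. ereal (s n * dist ((T^^n) x) z))" by (intro continuous_intros)
    show "(\<lambda>y. ereal (s n * dist ((T^^n) x) y)) \<in> borel_measurable borel"
      by (rule borel_measurable_continuous_onI[OF c])
  qed
  then show ?thesis by (subst measurable_cong_sets[OF M refl]) assumption
qed

lemma greedy:
  fixes c :: "nat \<Rightarrow> real" and \<alpha> :: real
  assumes c0: "\<And>i. c i \<ge> 0" and ap: "\<alpha> > 0"
  shows "\<alpha> * (\<Sum>j\<in>{p..<L}. if (\<exists>n. 1 \<le> n \<and> n \<le> K \<and> \<alpha> * real n < (\<Sum>i\<in>{j..<j+n}. c i)) then 1 else 0)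
          \<le> (\<Sum>j\<in>{p..<L+K}. c j)"
proof (induction "L - p" arbitrary: p rule: less_induct)
  case less
  define bad where "bad j = (\<exists>n. 1 \<le> n \<and> n \<le> K \<and> \<alpha> * real n < (\<Sum>i\<in>{j..<j+n}. c i))" for j
  define f where "f j = (if bad j then 1 else 0 :: real)" for j
  have f01: "0 \<le> f j" "f j \<le> 1" for j unfolding f_def by auto
  have IH: "\<And>q. L - q < L - p \<Longrightarrow> \<alpha> * (\<Sum>j\<in>{q..<L}. f j) \<le> (\<Sum>j\<in>{q..<L+K}. c j)"
    using less unfolding f_def bad_def by blast
  have csum: "(\<Sum>j\<in>{a..<b}. c j) \<ge> 0" for a b using c0 by (simp add: sum_nonneg)
  show ?case unfolding bad_def[symmetric] f_def[symmetric]
  proof (cases "p < L")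
    case False
    then show "\<alpha> * (\<Sum>j\<in>{p..<L}. f j) \<le> (\<Sum>j\<in>{p..<L+K}. c j)" using csum by simp
  next
    case True
    show "\<alpha> * (\<Sum>j\<in>{p..<L}. f j) \<le> (\<Sum>j\<in>{p..<L+K}. c j)"
    proof (cases "bad p")
      case False
      have "(\<Sum>j\<in>{p..<L}. f j) = f p + (\<Sum>j\<in>{Suc p..<L}. f j)" using True by (rule sum.atLeast_Suc_lessThan)
      also have "\<dots> = (\<Sum>j\<in>{Suc p..<L}. f j)" using False unfolding f_def by simp
      finally have e1: "(\<Sum>j\<in>{p..<L}. f j) = (\<Sum>j\<in>{Suc p..<L}. f j)" .
      have "\<alpha> * (\<Sum>j\<in>{Suc p..<L}. f j) \<le> (\<Sum>j\<in>{Suc p..<L+K}. c j)" by (rule IH) (use True in simp)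
      also have "\<dots> \<le> (\<Sum>j\<in>{p..<L+K}. c j)" by (rule sum_mono2) (auto simp: c0)
      finally show ?thesis unfolding e1 .
    next
      case True2: True
      then obtain n where n: "1 \<le> n" "n \<le> K" "\<alpha> * real n < (\<Sum>i\<in>{p..<p+n}. c i)"
        unfolding bad_def by blast
      have "(\<Sum>j\<in>{p..<L}. f j) \<le> (\<Sum>j\<in>{p..<p+n}. f j) + (\<Sum>j\<in>{p+n..<L}. f j)"
      proof (cases "p + n \<le> L")
        case True
        then show ?thesis using sum.atLeastLessThan_concat[of p "p+n" L f] by simp
      next
        case False
        have "(\<Sum>j\<in>{p..<L}. f j) \<le> (\<Sum>j\<in>{p..<p+n}. f j)" using False by (intro sum_mono2) (auto simp: f01)
        then show ?thesis using False by simp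
      qed
      also have "(\<Sum>j\<in>{p..<p+n}. f j) \<le> real n"
      proof -
        have "(\<Sum>j\<in>{p..<p+n}. f j) \<le> (\<Sum>j\<in>{p..<p+n}. 1)" by (rule sum_mono) (rule f01(2))
        then show ?thesis by simp
      qed
      finally have s1: "(\<Sum>j\<in>{p..<L}. f j) \<le> real n + (\<Sum>j\<in>{p+n..<L}. f j)" by simp
      have s2: "\<alpha> * (\<Sum>j\<in>{p+n..<L}. f j) \<le> (\<Sum>j\<in>{p+n..<L+K}. c j)" by (rule IH) (use \<open>p < L\<close> n in simp)
      have s3: "(\<Sum>j\<in>{p..<p+n}. c j) + (\<Sum>j\<in>{p+n..<L+K}. c j) = (\<Sum>j\<in>{p..<L+K}. c j)"
        by (rule sum.atLeastLessThan_concat) (use \<open>p < L\<close> n in auto)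
      have "\<alpha> * (\<Sum>j\<in>{p..<L}. f j) \<le> \<alpha> * (real n + (\<Sum>j\<in>{p+n..<L}. f j))"
        using s1 ap by (intro mult_left_mono) auto
      also have "\<dots> = \<alpha> * real n + \<alpha> * (\<Sum>j\<in>{p+n..<L}. f j)" by (simp add: algebra_simps)
      also have "\<dots> \<le> (\<Sum>j\<in>{p..<p+n}. c j) + (\<Sum>j\<in>{p+n..<L+K}. c j)" using n(3) s2 by linarith
      finally show ?thesis using s3 by simp
    qed
  qed
qed

lemma ind_int:
  assumes P: "prob_space M" and T: "T \<in> measurable M M" and D: "distr M M T = M" and B: "B \<in> sets M"
  shows "integrable M (\<lambda>x. indicator B ((T^^j) x) :: real)"
    and "integral\<^sup>L M (\<lambda>x. indicator B ((T^^j) x) :: real) = measure M B"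
proof -
  have Tj: "(T^^j) \<in> measurable M M" by (rule funpow_meas[OF T])
  have dj: "distr M M (T^^j) = M" by (rule funpow_distr[OF T D])
  have bi: "(indicator B :: 'a \<Rightarrow> real) \<in> borel_measurable M" using B by simp
  have fin: "emeasure M B < \<infinity>" using finite_measure.emeasure_finite[OF prob_space.finite_measure[OF P]]
    by (simp add: less_top)
  have "integrable M (indicator B :: 'a \<Rightarrow> real)" using B fin by simp
  then have "integrable (distr M M (T^^j)) (indicator B :: 'a \<Rightarrow> real)" using dj by simp
  then show "integrable M (\<lambda>x. indicator B ((T^^j) x) :: real)" using integrable_distr_eq[OF Tj bi] by simp
  have "integral\<^sup>L M (\<lambda>x. indicator B ((T^^j) x) :: real) = integral\<^sup>L (distr M M (T^^j)) (indicator B)"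
    using integral_distr[OF Tj bi] by simp
  also have "\<dots> = measure M (B \<inter> space M)" using dj by simp
  also have "\<dots> = measure M B" using B sets.Int_space_eq2 by simp
  finally show "integral\<^sup>L M (\<lambda>x. indicator B ((T^^j) x) :: real) = measure M B" .
qed

lemma maximal_ineq:
  assumes P: "prob_space M" and T: "T \<in> measurable M M" and D: "distr M M T = M"
    and A: "A \<in> sets M" and ap: "\<alpha> > 0"
  defines "Bad K \<equiv> {x\<in>space M. \<exists>n. 1 \<le> n \<and> n \<le> K \<and> \<alpha> * real n < (\<Sum>i<n. indicator A ((T^^i) x))}"
  shows "\<alpha> * measure M (Bad K) \<le> measure M A"
proof -
  have Tn[measurable]: "(T^^i) \<in> measurable M M" for i by (rule funpow_meas[OF T])
  have [measurable]: "A \<in> sets M" by (rule A)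
  have BS: "Bad K \<in> sets M" unfolding Bad_def by measurable
  have key: "\<alpha> * (\<Sum>j<L. indicator (Bad K) ((T^^j) x)) \<le> (\<Sum>j<L+K. indicator A ((T^^j) x))"
    if x: "x \<in> space M" for x L
  proof -
    define c where "c j = (indicator A ((T^^j) x) :: real)" for j
    have c0: "c j \<ge> 0" for j unfolding c_def by simp
    have xj: "(T^^j) x \<in> space M" for j using measurable_space[OF Tn x] .
    have sh: "(\<Sum>i<n. indicator A ((T^^i) ((T^^j) x))) = (\<Sum>i\<in>{j..<j+n}. c i)" for n j
    proof -
      have "(\<Sum>i\<in>{j..<j+n}. c i) = (\<Sum>i\<in>{0+j..<n+j}. c i)" by (simp add: add.commute)
      also have "\<dots> = (\<Sum>i\<in>{0..<n}. c (i + j))" by (rule sum.shift_bounds_nat_ivl)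
      also have "\<dots> = (\<Sum>i<n. indicator A ((T^^i) ((T^^j) x)))"
        unfolding c_def by (simp add: atLeast0LessThan funpow_add)
      finally show ?thesis by simp
    qed
    have ind: "indicator (Bad K) ((T^^j) x) = (if (\<exists>n. 1 \<le> n \<and> n \<le> K \<and> \<alpha> * real n < (\<Sum>i\<in>{j..<j+n}. c i)) then 1 else (0::real))" for j
      unfolding Bad_def using xj[of j] sh by (simp add: indicator_def)
    have "\<alpha> * (\<Sum>j\<in>{0..<L}. if (\<exists>n. 1 \<le> n \<and> n \<le> K \<and> \<alpha> * real n < (\<Sum>i\<in>{j..<j+n}. c i)) then 1 else 0)
          \<le> (\<Sum>j\<in>{0..<L+K}. c j)" by (rule greedy[OF c0 ap])
    then show ?thesis unfolding ind c_def by (simp add: atLeast0LessThan)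
  qed
  have int0: "integral\<^sup>L M (\<lambda>x. (\<Sum>j<L. indicator (Bad K) ((T^^j) x) :: real)) = real L * measure M (Bad K)" for L
    using ind_int[OF P T D BS] by (simp add: integral_sum)
  have int1: "integral\<^sup>L M (\<lambda>x. \<alpha> * (\<Sum>j<L. indicator (Bad K) ((T^^j) x))) = \<alpha> * (real L * measure M (Bad K))" for L
    unfolding integral_mult_right_zero int0 ..
  have int2: "integral\<^sup>L M (\<lambda>x. (\<Sum>j<L+K. indicator A ((T^^j) x) :: real)) = real (L+K) * measure M A" for L
    using ind_int[OF P T D A] by (simp add: integral_sum)
  have le: "\<alpha> * (real L * measure M (Bad K)) \<le> real (L+K) * measure M A" for L
  proof -
    have "integral\<^sup>L M (\<lambda>x. \<alpha> * (\<Sum>j<L. indicator (Bad K) ((T^^j) x))) \<le> integral\<^sup>L M (\<lambda>x. (\<Sum>j<L+K. indicator A ((T^^j) x) :: real))"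
      by (rule integral_mono) (use ind_int[OF P T D BS] ind_int[OF P T D A] key in auto)
    then show ?thesis unfolding int1 int2 .
  qed
  show ?thesis
  proof (rule ccontr)
    assume "\<not> ?thesis"
    then have gap: "\<alpha> * measure M (Bad K) - measure M A > 0" by simp
    obtain L :: nat where L: "real L > real K * measure M A / (\<alpha> * measure M (Bad K) - measure M A)"
      using reals_Archimedean2 by blast
    then have "real L * (\<alpha> * measure M (Bad K) - measure M A) > real K * measure M A"
      using gap by (simp add: field_simps)
    then have "\<alpha> * (real L * measure M (Bad K)) > real (L+K) * measure M A"
      by (simp add: algebra_simps)
    then show False using le[of L] by simp
  qed
qed

lemma maximal_ineq_inf:
  assumes P: "prob_space M" and T: "T \<in> measurable M M" and D: "distr M M T = M"
    and A: "A \<in> sets M" and ap: "\<alpha> > 0"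
  shows "\<alpha> * measure M {x\<in>space M. \<exists>n. 1 \<le> n \<and> \<alpha> * real n < (\<Sum>i<n. indicator A ((T^^i) x))} \<le> measure M A"
proof -
  define Bad where "Bad K = {x\<in>space M. \<exists>n. 1 \<le> n \<and> n \<le> K \<and> \<alpha> * real n < (\<Sum>i<n. indicator A ((T^^i) x))}" for K
  have Tn[measurable]: "(T^^i) \<in> measurable M M" for i by (rule funpow_meas[OF T])
  have [measurable]: "A \<in> sets M" by (rule A)
  have BS: "Bad K \<in> sets M" for K unfolding Bad_def by measurable
  have U: "(\<Union>K. Bad K) = {x\<in>space M. \<exists>n. 1 \<le> n \<and> \<alpha> * real n < (\<Sum>i<n. indicator A ((T^^i) x))}"
    unfolding Bad_def by blast
  have "incseq Bad" unfolding incseq_def Bad_def by fastforce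
  then have "(\<lambda>K. measure M (Bad K)) \<longlonglongrightarrow> measure M (\<Union>K. Bad K)"
    using BS by (intro finite_measure.finite_Lim_measure_incseq[OF prob_space.finite_measure[OF P]]) auto
  then have "(\<lambda>K. \<alpha> * measure M (Bad K)) \<longlonglongrightarrow> \<alpha> * measure M (\<Union>K. Bad K)" by (rule tendsto_mult_left)
  moreover have "\<alpha> * measure M (Bad K) \<le> measure M A" for K
    unfolding Bad_def by (rule maximal_ineq[OF P T D A ap])
  ultimately have "\<alpha> * measure M (\<Union>K. Bad K) \<le> measure M A" by (intro LIMSEQ_le_const2) auto
  then show ?thesis unfolding U .
qed

lemma mono_from:
  fixes s :: "nat \<Rightarrow> real"
  assumes "\<forall>n\<ge>N1. s n \<le> s (Suc n)" "N1 \<le> a" "a \<le> b"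
  shows "s a \<le> s b"
  using assms(3)
proof (induction b rule: dec_induct)
  case base then show ?case by simp
next
  case (step n) then show ?case using assms(1,2) by (meson order_trans le_trans)
qed

lemma two_jumpy_01:
  fixes T :: "'a::metric_space \<Rightarrow> 'a"
  assumes P: "prob_space M" and Mb: "sets M = sets borel" and T: "T \<in> measurable M M" and D: "distr M M T = M"
    and Tb: "T \<in> borel_measurable borel" and sc: "scale_seq s" and tj: "two_jumpy s"
    and AEc: "AE x in M. phi s T x y = ereal c" and cp: "c > 0"
  shows False
proof -
  have spos: "\<And>n. s n > 0" using sc unfolding scale_seq_def by blast
  obtain N1 where N1: "\<forall>n\<ge>N1. s n \<le> s (Suc n)"
    using tj unfolding two_jumpy_def monotone_scale_def eventually_sequentially by blast
  have "1 < liminf (\<lambda>n. ereal (s (2*n) / s n))" using tj unfolding two_jumpy_def by blast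
  then obtain lam where l1: "1 < ereal lam" and l2: "ereal lam < liminf (\<lambda>n. ereal (s (2*n) / s n))"
    using ereal_dense2 by blast
  have lam: "lam > 1" using l1 by simp
  have "eventually (\<lambda>n. ereal lam < ereal (s (2*n) / s n)) sequentially" by (rule less_LiminfD[OF l2])
  then obtain N2 where N2: "\<forall>n\<ge>N2. lam < s (2*n) / s n" by (auto simp: eventually_sequentially)
  define c1 where "c1 = 2*c/(1+lam)"
  define c2 where "c2 = lam * c1"
  have c1p: "c1 > 0" unfolding c1_def using cp lam by simp
  have c1c: "c1 < c" unfolding c1_def using cp lam by (simp add: field_simps)
  have c2c: "c < c2" unfolding c2_def c1_def using cp lam by (simp add: field_simps)
  have Tn[measurable]: "(T^^i) \<in> measurable M M" for i by (rule funpow_meas[OF T])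
  have dm[measurable]: "(\<lambda>w. s m * dist ((T^^m) w) y) \<in> borel_measurable M" for m
  proof -
    have c: "continuous_on UNIV (\<lambda>z. s m * dist z y)" by (intro continuous_intros)
    have "(\<lambda>w. s m * dist ((T^^m) w) y) \<in> borel_measurable borel"
      by (rule borel_measurable_continuous_on[OF c funpow_meas[OF Tb]])
    then show ?thesis by (subst measurable_cong_sets[OF Mb refl]) assumption
  qed
  define F where "F m = {w\<in>space M. s m * dist ((T^^m) w) y < c1}" for m
  define G where "G N = space M - (\<Union>m\<in>{N..}. F m)" for N
  have FS: "F m \<in> sets M" for m unfolding F_def by measurable
  have GS: "G N \<in> sets M" for N unfolding G_def using FS by (intro sets.Diff sets.top sets.countable_UN) auto
  have memG: "w \<in> G N \<longleftrightarrow> w \<in> space M \<and> (\<forall>m\<ge>N. w \<notin> F m)" for w N unfolding G_def by auto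
  have US: "(\<Union>N. G N) \<in> sets M" using GS by auto
  have AEG: "AE x in M. x \<in> (\<Union>N. G N)"
  proof (rule AE_mp[OF AEc AE_I2], rule impI)
    fix x assume x: "x \<in> space M" and px: "phi s T x y = ereal c"
    have "ereal c1 < liminf (\<lambda>m. ereal (s m * dist ((T^^m) x) y))" using px c1c unfolding phi_def by simp
    then have "eventually (\<lambda>m. ereal c1 < ereal (s m * dist ((T^^m) x) y)) sequentially" by (rule less_LiminfD)
    then obtain N where "\<forall>m\<ge>N. c1 < s m * dist ((T^^m) x) y" by (auto simp: eventually_sequentially)
    then have "x \<in> G N" unfolding memG F_def using x by fastforce
    then show "x \<in> (\<Union>N. G N)" by blast
  qed
  have m1: "measure M (\<Union>N. G N) = 1" using prob_space.AE_in_set_eq_1[OF P US] AEG by simp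
  have "incseq G" unfolding incseq_def memG by (auto simp: memG)
  then have "(\<lambda>N. measure M (G N)) \<longlonglongrightarrow> measure M (\<Union>N. G N)"
    using GS by (intro finite_measure.finite_Lim_measure_incseq[OF prob_space.finite_measure[OF P]]) auto
  then have "(\<lambda>N. measure M (G N)) \<longlonglongrightarrow> 1" using m1 by simp
  then have "eventually (\<lambda>N. 3/4 < measure M (G N)) sequentially" by (rule order_tendstoD(1)) simp
  then obtain N3 where N3: "\<forall>N\<ge>N3. 3/4 < measure M (G N)" by (auto simp: eventually_sequentially)
  define N where "N = max (max N1 N2) (max N3 1)"
  have NN: "N \<ge> N1" "N \<ge> N2" "N \<ge> 1" "3/4 < measure M (G N)" unfolding N_def using N3 by auto
  define A where "A = space M - G N"
  have AS[measurable]: "A \<in> sets M" unfolding A_def using GS by auto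
  have mA: "measure M A < 1/4"
  proof -
    have "measure M A = 1 - measure M (G N)" unfolding A_def by (rule prob_space.prob_compl[OF P GS])
    then show ?thesis using NN(4) by simp
  qed
  define Bad where "Bad = {x\<in>space M. \<exists>n. 1 \<le> n \<and> (1/4) * real n < (\<Sum>i<n. indicator A ((T^^i) x) :: real)}"
  have MI: "(1/4) * measure M Bad \<le> measure M A" unfolding Bad_def
    by (rule maximal_ineq_inf[OF P T D AS]) simp
  have BS: "Bad \<in> sets M" unfolding Bad_def by measurable
  have AEB: "AE x in M. x \<in> Bad"
  proof (rule AE_mp[OF AEc AE_I2], rule impI)
    fix x assume x: "x \<in> space M" and px: "phi s T x y = ereal c"
    have "liminf (\<lambda>n. ereal (s n * dist ((T^^n) x) y)) < ereal c2" using px c2c unfolding phi_def by simp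
    then have "\<exists>\<^sub>F n in sequentially. s n * dist ((T^^n) x) y < c2" by (rule freq_less_liminf)
    then obtain n where n: "n \<ge> 4*N+4" "s n * dist ((T^^n) x) y < c2" unfolding frequently_sequentially by blast
    define m where "m = n div 2"
    have m: "N \<le> m" "2*m \<le> n" "n \<le> 2*m+1" "m \<le> n" using n(1) unfolding m_def by auto
    have inA: "(T^^i) x \<in> A" if i: "i \<in> {n-m..n-N}" for i
    proof -
      define m' where "m' = n - i"
      have m': "N \<le> m'" "m' \<le> m" "m' + i = n" using i m unfolding m'_def by auto
      have eq: "(T^^m') ((T^^i) x) = (T^^n) x" using m'(3) by (metis comp_apply funpow_add)
      have s1: "s m' \<le> s m" by (rule mono_from[OF N1]) (use m' NN in auto)
      have "lam < s (2*m) / s m" using N2 m NN by auto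
      then have s2: "lam * s m < s (2*m)" using spos[of m] by (simp add: field_simps)
      have s3: "s (2*m) \<le> s n" by (rule mono_from[OF N1]) (use m NN in auto)
      have "lam * s m' \<le> s n" using s1 s2 s3 lam by (smt (verit) mult_left_mono)
      then have "lam * (s m' * dist ((T^^n) x) y) \<le> s n * dist ((T^^n) x) y"
        by (metis mult.assoc mult_right_mono zero_le_dist)
      also have "\<dots> < lam * c1" using n(2) unfolding c2_def .
      finally have "s m' * dist ((T^^m') ((T^^i) x)) y < c1" unfolding eq using lam by simp
      moreover have "(T^^i) x \<in> space M" using measurable_space[OF Tn x] .
      ultimately have "(T^^i) x \<in> F m'" unfolding F_def by simp
      then have "(T^^i) x \<notin> G N" using m'(1) memG by blast
      then show ?thesis unfolding A_def using measurable_space[OF Tn x] by blast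
    qed
    have sub: "{n-m..n-N} \<subseteq> {..<n}" using m NN n by auto
    have "(\<Sum>i\<in>{n-m..n-N}. indicator A ((T^^i) x) :: real) = (\<Sum>i\<in>{n-m..n-N}. 1)"
      using inA by (intro sum.cong) auto
    also have "\<dots> = real (Suc (n - N) - (n - m))" by simp
    also have "Suc (n - N) - (n - m) = m + 1 - N" using m NN by arith
    finally have cnt: "(\<Sum>i\<in>{n-m..n-N}. indicator A ((T^^i) x) :: real) = real m + 1 - real N"
      using m(1) by (simp add: of_nat_diff)
    have "(\<Sum>i\<in>{n-m..n-N}. indicator A ((T^^i) x) :: real) \<le> (\<Sum>i<n. indicator A ((T^^i) x))"
      by (rule sum_mono2[OF _ sub]) auto
    moreover have "(1/4) * real n < real m + 1 - real N" using m n(1) by linarith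
    ultimately have "(1/4) * real n < (\<Sum>i<n. indicator A ((T^^i) x) :: real)" using cnt by linarith
    moreover have "1 \<le> n" using n(1) by simp
    ultimately show "x \<in> Bad" unfolding Bad_def using x by blast
  qed
  have "measure M Bad = 1" using prob_space.AE_in_set_eq_1[OF P BS] AEB by simp
  then show False using MI mA by simp
qed
theorem proposition6p3:
  fixes T :: "'a::metric_space \<Rightarrow> 'a" and s :: "nat \<Rightarrow> real"
  assumes sep: "separable_space (euclidean :: 'a topology)"
    and Tmeas: "T \<in> borel_measurable borel"
    and sc: "scale_seq s"
  shows
    "((monotone_scale s \<or> steady s) \<longrightarrow>
       (\<forall>\<mu> y. borel_prob \<mu> \<and> invariant_measure T \<mu> \<and> ergodic_measure T \<mu> \<longrightarrow>
          (\<exists>c. (AE x in \<mu>. phi s T x y = c) \<and> (two_jumpy s \<longrightarrow> c \<in> {0, \<infinity>}))))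
     \<and> (\<forall>\<nu>. steady s \<and> borel_prob \<nu> \<and> invariant_measure T \<nu> \<and> ergodic_measure T \<nu>
           \<and> local_contraction_mod T \<nu> \<longrightarrow>
          (\<forall>x. \<exists>c. AE y in \<nu>. phi s T x y = c))
     \<and> (\<forall>\<nu>. nice s \<and> borel_prob \<nu> \<and> invariant_measure T \<nu> \<and> ergodic_measure T \<nu>
           \<and> decisive \<nu> \<and> locally_lipschitz_mod T \<nu> \<longrightarrow>
          (\<forall>x. (AE y in \<nu>. phi s T x y = 0) \<or> (AE y in \<nu>. phi s T x y = \<infinity>)))"
proof (intro conjI allI impI)
  assume ms: "monotone_scale s \<or> steady s"
  fix \<mu> y assume H: "borel_prob \<mu> \<and> invariant_measure T \<mu> \<and> ergodic_measure T \<mu>"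
  have P: "prob_space \<mu>" and Mb: "sets \<mu> = sets borel" using H unfolding borel_prob_def by auto
  have T: "T \<in> measurable \<mu> \<mu>" and D: "distr \<mu> \<mu> T = \<mu>" using H unfolding invariant_measure_def by auto
  have E: "ergodic_measure T \<mu>" using H by blast
  have "\<exists>c. AE x in \<mu>. phi s T x y = c"
    by (rule inv_fun[OF P T D E phi_meas_x[OF Tmeas Mb]]) (rule always_eventually, use phi_Tx_le[OF sc ms] in blast)
  then obtain c where c: "AE x in \<mu>. phi s T x y = c" by blast
  have "two_jumpy s \<longrightarrow> c \<in> {0, \<infinity>}"
  proof
    assume tj: "two_jumpy s"
    obtain x0 where x0: "phi s T x0 y = c"
      using eventually_happens'[OF prob_space.ae_filter_bot[OF P] c] by blast
    have spos: "\<And>n. s n > 0" using sc unfolding scale_seq_def by blast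
    have "0 \<le> phi s T x0 y" unfolding phi_def by (rule liminf_nonneg) (use spos in \<open>simp add: less_imp_le\<close>)
    then have c0: "0 \<le> c" using x0 by simp
    show "c \<in> {0, \<infinity>}"
    proof (cases c)
      case (real r)
      show ?thesis
      proof (cases "r = 0")
        case True then show ?thesis using real by (simp add: zero_ereal_def)
      next
        case False
        then have "r > 0" using c0 real by simp
        then have False using two_jumpy_01[OF P Mb T D Tmeas sc tj] c real by blast
        then show ?thesis ..
      qed
    next
      case PInf then show ?thesis by simp
    next
      case MInf then show ?thesis using c0 by simp
    qed
  qed
  then show "\<exists>c. (AE x in \<mu>. phi s T x y = c) \<and> (two_jumpy s \<longrightarrow> c \<in> {0, \<infinity>})" using c by blast
next
  fix \<nu> x assume H: "steady s \<and> borel_prob \<nu> \<and> invariant_measure T \<nu> \<and> ergodic_measure T \<nu> \<and> local_contraction_mod T \<nu>"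
  have P: "prob_space \<nu>" and Mb: "sets \<nu> = sets borel" using H unfolding borel_prob_def by auto
  have T: "T \<in> measurable \<nu> \<nu>" and D: "distr \<nu> \<nu> T = \<nu>" using H unfolding invariant_measure_def by auto
  have E: "ergodic_measure T \<nu>" and st: "steady s" using H by blast+
  have LC: "AE y in \<nu>. dilation_gauge T y \<le> 1" using H unfolding local_contraction_mod_def by blast
  have "AE y in \<nu>. phi s T x (T y) \<le> phi s T x y"
    using LC by (rule eventually_mono) (rule phi_Ty_le[OF sc st])
  then show "\<exists>c. AE y in \<nu>. phi s T x y = c"
    by (rule inv_fun[OF P T D E phi_meas_y[OF Mb]])
next
  fix \<nu> x assume H: "nice s \<and> borel_prob \<nu> \<and> invariant_measure T \<nu> \<and> ergodic_measure T \<nu> \<and> decisive \<nu> \<and> locally_lipschitz_mod T \<nu>"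
  have P: "prob_space \<nu>" and Mb: "sets \<nu> = sets borel" using H unfolding borel_prob_def by auto
  have T: "T \<in> measurable \<nu> \<nu>" and D: "distr \<nu> \<nu> T = \<nu>" using H unfolding invariant_measure_def by auto
  have E: "ergodic_measure T \<nu>" and dec: "decisive \<nu>" using H by blast+
  have br: "bounded_ratio s" using H unfolding nice_def by blast
  have LL: "AE y in \<nu>. dilation_gauge T y < \<infinity>" using H unfolding locally_lipschitz_mod_def by blast
  define Z where "Z = {y\<in>space \<nu>. phi s T x y = 0}"
  have pm[measurable]: "(\<lambda>y. phi s T x y) \<in> borel_measurable \<nu>" by (rule phi_meas_y[OF Mb])
  have ZS: "Z \<in> sets \<nu>" unfolding Z_def by measurable
  have "AE y in \<nu>. y \<in> Z \<longrightarrow> T y \<in> Z"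
  proof (rule AE_mp[OF LL AE_I2], intro impI)
    fix y assume y: "y \<in> space \<nu>" and d: "dilation_gauge T y < \<infinity>" and z: "y \<in> Z"
    have "phi s T x (T y) = 0" by (rule phi_Ty_zero[OF sc br d]) (use z in \<open>simp add: Z_def\<close>)
    then show "T y \<in> Z" unfolding Z_def using measurable_space[OF T y] by simp
  qed
  then have "emeasure \<nu> Z = 0 \<or> emeasure \<nu> Z = 1" by (rule inv_set[OF T D E ZS])
  then show "(AE y in \<nu>. phi s T x y = 0) \<or> (AE y in \<nu>. phi s T x y = \<infinity>)"
  proof
    assume "emeasure \<nu> Z = 1"
    then have "measure \<nu> Z = 1" by (simp add: measure_def)
    then have "AE y in \<nu>. y \<in> Z" by (rule prob_space.AE_prob_1[OF P])
    then have "AE y in \<nu>. phi s T x y = 0" by (rule eventually_mono) (simp add: Z_def)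
    then show ?thesis ..
  next
    assume "emeasure \<nu> Z = 0"
    then have "Z \<in> null_sets \<nu>" using ZS by (simp add: null_sets_def)
    then have nz: "AE y in \<nu>. y \<notin> Z" by (rule AE_not_in)
    have dall: "\<forall>(xs :: nat \<Rightarrow> 'a) s. scale_seq s \<longrightarrow>
     (AE y in \<nu>. liminf (\<lambda>n. ereal (s n * dist (xs n) y)) \<in> {0, \<infinity>})"
      using dec unfolding decisive_def .
    have dd: "AE y in \<nu>. liminf (\<lambda>n. ereal (s n * dist ((T^^n) x) y)) \<in> {0, \<infinity>}"
      using spec[OF spec[OF dall, of "\<lambda>n. (T^^n) x"], of s] sc by blast
    have "AE y in \<nu>. phi s T x y = \<infinity>"
    proof (rule AE_mp[OF eventually_conj[OF nz dd] AE_I2], rule impI)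
      fix y assume y: "y \<in> space \<nu>" and h: "y \<notin> Z \<and> liminf (\<lambda>n. ereal (s n * dist ((T^^n) x) y)) \<in> {0, \<infinity>}"
      then show "phi s T x y = \<infinity>" unfolding Z_def phi_def by auto
    qed
    then show ?thesis ..
  qed
qed

end
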